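(* The type ${\mathbf{R}_\mathbf{E}}$ of Euclidean reals is Cauchy complete: every Cauchy approximation in ${\mathbf{R}_\mathbf{E}}$ has a limit in ${\mathbf{R}_\mathbf{E}}$.
   Context: Work in univalent type theory with propositional truncation, function extensionality and propositional resizing; $\Omega$ is the type of propositions, $\exists$ and $\vee$ are truncated; a subtype of $A$ is a map $A\to\Omega$, identified with $\sum_{a:A}P(a)$. $\mathbf{Q}$ is the rationals, $\mathbf{Q}_+$ the positive rationals. For predicates $L,U:\mathbf{Q}\to\Omega$ and $x=(L,U)$ write $q<x$ for $L(q)$ and $x<r$ for $U(r)$. $x$ is a Dedekind cut if: (inhabited) $\exists q.\,q<x$ and $\exists r.\,x<r$; (rounded) $q<x\Leftrightarrow\exists q'.(q<q')\wedge(q'<x)$ and $x<r\Leftrightarrow\exists r'.(r'<r)\wedge(x<r')$; (transitive) $(q<x)\wedge(x<r)\Rightarrow q<r$; (located) $q<r\Rightarrow(q<x)\vee(x<r)$. ${\mathbf{R}_\mathbf{D}}$ is the type of Dedekind cuts, with $\mathsf{rat}(q)$ the cut with $r<\mathsf{rat}(q)\Leftrightarrow r<q$ and $\mathsf{rat}(q)<r\Leftrightarrow q<r$. Define $q<x+y:=\exists s,t.(q=s+t)\wedge(s<x)\wedge(t<y)$, $x+y<r:=\exists s,t.(r=s+t)\wedge(x<s)\wedge(y<t)$; $q<-x:=x<-q$, $-x<r:=-r<x$; $x-y:=x+(-y)$; $q<|x|:=(q<x)\vee(q<-x)$, $|x|<r:=(x<r)\wedge(-x<r)$; premetric $x\sim_\varepsilon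 y:=|x-y|<\varepsilon$ ($\varepsilon$ in the upper cut of $|x-y|$). For a premetric space $R$ (a type with $\sim:\mathbf{Q}_+\times R\times R\to\Omega$), a Cauchy approximation is $x:\mathbf{Q}_+\to R$ with $\forall\delta,\varepsilon.\,x_\delta\sim_{\delta+\varepsilon}x_\varepsilon$; $u:R$ is a limit of $x$ if $\forall\varepsilon,\theta:\mathbf{Q}_+.\,x_\varepsilon\sim_{\varepsilon+\theta}u$; $R$ is Cauchy complete if every Cauchy approximation has a limit. A subtype $S$ of ${\mathbf{R}_\mathbf{D}}$ carries the restricted premetric (elements are $\varepsilon$-close in $S$ iff they are in ${\mathbf{R}_\mathbf{D}}$). The Euclidean reals ${\mathbf{R}_\mathbf{E}}$ is the smallest subtype of ${\mathbf{R}_\mathbf{D}}$ containing $\mathsf{rat}(q)$ for all $q:\mathbf{Q}$ and Cauchy complete with respect to the restricted premetric; concretely, $u\in{\mathbf{R}_\mathbf{E}}$ iff $u\in S$ for every such subtype $S$. *)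

theory Defs
  imports Complex_Main
begin

text \<open>A pair (L, U) of predicates on the rationals; q < x means L q, x < r means U r.\<close>
type_synonym cut = "(rat \<Rightarrow> bool) \<times> (rat \<Rightarrow> bool)"

definition lower :: "cut \<Rightarrow> rat \<Rightarrow> bool" where "lower x q = fst x q"
definition upper :: "cut \<Rightarrow> rat \<Rightarrow> bool" where "upper x r = snd x r"

definition is_dedekind_cut :: "cut \<Rightarrow> bool" where
  "is_dedekind_cut x \<longleftrightarrow>
     (\<exists>q. lower x q) \<and> (\<exists>r. upper x r) \<and>
     (\<forall>q. lower x q \<longleftrightarrow> (\<exists>q'. q < q' \<and> lower x q')) \<and>
     (\<forall>r. upper x r \<longleftrightarrow> (\<exists>r'. r' < r \<and> upper x r')) \<and>
     (\<forall>q r. lower x q \<and> upper x r \<longrightarrow> q < r) \<and>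
     (\<forall>q r. q < r \<longrightarrow> lower x q \<or> upper x r)"

definition RD :: "cut set" where "RD = {x. is_dedekind_cut x}"

definition rat_cut :: "rat \<Rightarrow> cut" where
  "rat_cut q = ((\<lambda>r. r < q), (\<lambda>r. q < r))"

definition cut_add :: "cut \<Rightarrow> cut \<Rightarrow> cut" where
  "cut_add x y =
     ((\<lambda>q. \<exists>s t. q = s + t \<and> lower x s \<and> lower y t),
      (\<lambda>r. \<exists>s t. r = s + t \<and> upper x s \<and> upper y t))"

definition cut_neg :: "cut \<Rightarrow> cut" where
  "cut_neg x = ((\<lambda>q. upper x (- q)), (\<lambda>r. lower x (- r)))"

definition cut_sub :: "cut \<Rightarrow> cut \<Rightarrow> cut" where
  "cut_sub x y = cut_add x (cut_neg y)"

definition cut_abs :: "cut \<Rightarrow> cut" where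
  "cut_abs x = ((\<lambda>q. lower x q \<or> lower (cut_neg x) q),
                (\<lambda>r. upper x r \<and> upper (cut_neg x) r))"

definition close :: "rat \<Rightarrow> cut \<Rightarrow> cut \<Rightarrow> bool" where
  "close \<epsilon> x y \<longleftrightarrow> upper (cut_abs (cut_sub x y)) \<epsilon>"

text \<open>Cauchy approximation in a subtype S of RD: a map from the positive rationals
  (represented as a function on rat, only its values at positive arguments matter) into S.\<close>
definition cauchy_approx_in :: "cut set \<Rightarrow> (rat \<Rightarrow> cut) \<Rightarrow> bool" where
  "cauchy_approx_in S x \<longleftrightarrow>
     (\<forall>\<epsilon>>0. x \<epsilon> \<in> S) \<and>
     (\<forall>\<delta>>0. \<forall>\<epsilon>>0. close (\<delta> + \<epsilon>) (x \<delta>) (x \<epsilon>))"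

definition is_limit :: "(rat \<Rightarrow> cut) \<Rightarrow> cut \<Rightarrow> bool" where
  "is_limit x u \<longleftrightarrow> (\<forall>\<epsilon>>0. \<forall>\<theta>>0. close (\<epsilon> + \<theta>) (x \<epsilon>) u)"

definition cauchy_complete :: "cut set \<Rightarrow> bool" where
  "cauchy_complete S \<longleftrightarrow> (\<forall>x. cauchy_approx_in S x \<longrightarrow> (\<exists>u\<in>S. is_limit x u))"

definition RE :: "cut set" where
  "RE = {u. \<forall>S. S \<subseteq> RD \<and> (\<forall>q. rat_cut q \<in> S) \<and> cauchy_complete S \<longrightarrow> u \<in> S}"

end

theory Submission
  imports Defs
begin

lemma DL: "is_dedekind_cut x \<Longrightarrow> lower x q \<Longrightarrow> p < q \<Longrightarrow> lower x p"
  unfolding is_dedekind_cut_def by blast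
lemma DU: "is_dedekind_cut x \<Longrightarrow> upper x r \<Longrightarrow> r < s \<Longrightarrow> upper x s"
  unfolding is_dedekind_cut_def by blast
lemma DT: "is_dedekind_cut x \<Longrightarrow> lower x q \<Longrightarrow> upper x r \<Longrightarrow> q < r"
  unfolding is_dedekind_cut_def by blast
lemma DLoc: "is_dedekind_cut x \<Longrightarrow> q < r \<Longrightarrow> lower x q \<or> upper x r"
  unfolding is_dedekind_cut_def by blast
lemma DI: "is_dedekind_cut x \<Longrightarrow> \<exists>q. lower x q"
  unfolding is_dedekind_cut_def by blast

lemma DLle: "is_dedekind_cut x \<Longrightarrow> lower x q \<Longrightarrow> p \<le> q \<Longrightarrow> lower x p"
  by (metis DL order_le_imp_less_or_eq)
lemma DUle: "is_dedekind_cut x \<Longrightarrow> upper x r \<Longrightarrow> r \<le> s \<Longrightarrow> upper x s"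
  by (metis DU order_le_imp_less_or_eq)

definition cl :: "rat \<Rightarrow> cut \<Rightarrow> cut \<Rightarrow> bool" where
  "cl a x y \<longleftrightarrow> (\<exists>s p. upper x s \<and> lower y p \<and> s - p \<le> a) \<and>
                (\<exists>s p. lower x s \<and> upper y p \<and> p - s \<le> a)"

lemma close_cl: "close a x y \<Longrightarrow> cl a x y"
proof -
  assume c: "close a x y"
  hence h: "upper (cut_sub x y) a \<and> upper (cut_neg (cut_sub x y)) a"
    unfolding close_def cut_abs_def upper_def lower_def by simp
  from h obtain s t where 1: "a = s + t" "upper x s" "lower y (- t)"
    unfolding cut_sub_def cut_add_def cut_neg_def upper_def lower_def by auto
  from h obtain s' t' where 2: "- a = s' + t'" "lower x s'" "upper y (- t')"
    unfolding cut_sub_def cut_add_def cut_neg_def upper_def lower_def by auto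
  show ?thesis unfolding cl_def
  proof (intro conjI)
    show "\<exists>s p. upper x s \<and> lower y p \<and> s - p \<le> a"
      using 1 by (intro exI[of _ s] exI[of _ "-t"]) auto
    show "\<exists>s p. lower x s \<and> upper y p \<and> p - s \<le> a"
      using 2 by (intro exI[of _ s'] exI[of _ "-t'"]) auto
  qed
qed

lemma cl_close: "is_dedekind_cut x \<Longrightarrow> is_dedekind_cut y \<Longrightarrow> cl a x y \<Longrightarrow> close a x y"
proof -
  assume dx: "is_dedekind_cut x" and dy: "is_dedekind_cut y" and c: "cl a x y"
  from c obtain s p where 1: "upper x s" "lower y p" "s - p \<le> a" unfolding cl_def by blast
  from c obtain s' p' where 2: "lower x s'" "upper y p'" "p' - s' \<le> a" unfolding cl_def by blast
  have u1: "upper x (a + p)" using DUle[OF dx 1(1)] 1(3) by simp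
  have l2: "lower x (p' - a)" using DLle[OF dx 2(1)] 2(3) by simp
  have A: "upper (cut_sub x y) a"
  proof -
    have "\<exists>s t. a = s + t \<and> upper x s \<and> lower y (- t)"
      using u1 1(2) by (intro exI[of _ "a + p"] exI[of _ "-p"]) simp
    thus ?thesis unfolding cut_sub_def cut_add_def cut_neg_def upper_def lower_def by simp
  qed
  have B: "upper (cut_neg (cut_sub x y)) a"
  proof -
    have "\<exists>s t. - a = s + t \<and> lower x s \<and> upper y (- t)"
      using l2 2(2) by (intro exI[of _ "p' - a"] exI[of _ "-p'"]) simp
    thus ?thesis unfolding cut_sub_def cut_add_def cut_neg_def upper_def lower_def by simp
  qed
  show ?thesis using A B unfolding close_def cut_abs_def upper_def lower_def by simp
qed

lemma cl_sym: "cl a x y \<Longrightarrow> cl a y x"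
  unfolding cl_def by blast

lemma cl_tri: "is_dedekind_cut y \<Longrightarrow> cl a y u \<Longrightarrow> cl b y v \<Longrightarrow> cl (a + b) u v"
proof -
  assume dy: "is_dedekind_cut y" and c1: "cl a y u" and c2: "cl b y v"
  from c1 obtain s1 p1 where A: "upper y s1" "lower u p1" "s1 - p1 \<le> a" unfolding cl_def by blast
  from c1 obtain s2 p2 where B: "lower y s2" "upper u p2" "p2 - s2 \<le> a" unfolding cl_def by blast
  from c2 obtain s3 p3 where C: "upper y s3" "lower v p3" "s3 - p3 \<le> b" unfolding cl_def by blast
  from c2 obtain s4 p4 where D: "lower y s4" "upper v p4" "p4 - s4 \<le> b" unfolding cl_def by blast
  have "s2 < s3" using DT[OF dy B(1) C(1)] .
  moreover have "s4 < s1" using DT[OF dy D(1) A(1)] .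
  ultimately have "upper u p2 \<and> lower v p3 \<and> p2 - p3 \<le> a + b"
     "lower u p1 \<and> upper v p4 \<and> p4 - p1 \<le> a + b" using A B C D by auto
  thus ?thesis unfolding cl_def by blast
qed

lemma cl_eq: "is_dedekind_cut u \<Longrightarrow> is_dedekind_cut v \<Longrightarrow> (\<forall>e>0. cl e u v) \<Longrightarrow> u = v"
proof -
  assume du: "is_dedekind_cut u" and dv: "is_dedekind_cut v" and c: "\<forall>e>0. cl e u v"
  have LL: "lower b q" if db: "is_dedekind_cut a" "is_dedekind_cut b"
     and cc: "\<forall>e>0. cl e a b" and lq: "lower a q" for a b q
  proof -
    from db(1) lq obtain q' where q': "q < q'" "lower a q'"
      unfolding is_dedekind_cut_def by blast
    define d where "d = q' - q"
    have d: "d > 0" using q' d_def by simp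
    from cc d obtain s p where A: "upper a s" "lower b p" "s - p \<le> d / 2"
      unfolding cl_def by (meson half_gt_zero)
    have "q' < s" using DT[OF db(1) q'(2) A(1)] .
    hence "q < p" using A(3) d_def d by (simp add: field_simps)
    thus ?thesis using DL[OF db(2) A(2)] by simp
  qed
  have UU: "upper b q" if db: "is_dedekind_cut a" "is_dedekind_cut b"
     and cc: "\<forall>e>0. cl e a b" and lq: "upper a q" for a b q
  proof -
    from db(1) lq obtain q' where q': "q' < q" "upper a q'"
      unfolding is_dedekind_cut_def by blast
    define d where "d = q - q'"
    have d: "d > 0" using q' d_def by simp
    from cc d obtain s p where A: "lower a s" "upper b p" "p - s \<le> d / 2"
      unfolding cl_def by (meson half_gt_zero)
    have "s < q'" using DT[OF db(1) A(1) q'(2)] .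
    hence "p < q" using A(3) d_def d by (simp add: field_simps)
    thus ?thesis using DU[OF db(2) A(2)] by simp
  qed
  have c': "\<forall>e>0. cl e v u" using c cl_sym by blast
  have "fst u = fst v"
    using LL[OF du dv c] LL[OF dv du c'] unfolding lower_def by (intro ext iffI) auto
  moreover have "snd u = snd v"
    using UU[OF du dv c] UU[OF dv du c'] unfolding upper_def by (intro ext iffI) auto
  ultimately show ?thesis by (simp add: prod_eq_iff)
qed

definition limc :: "(rat \<Rightarrow> cut) \<Rightarrow> cut" where
  "limc x = ((\<lambda>q. \<exists>e>0. \<exists>t>0. lower (x e) (q + e + t)),
             (\<lambda>r. \<exists>e>0. \<exists>t>0. upper (x e) (r - e - t)))"

lemma limc_lower: "lower (limc x) q \<longleftrightarrow> (\<exists>e>0. \<exists>t>0. lower (x e) (q + e + t))"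
  unfolding limc_def lower_def by simp
lemma limc_upper: "upper (limc x) r \<longleftrightarrow> (\<exists>e>0. \<exists>t>0. upper (x e) (r - e - t))"
  unfolding limc_def upper_def by simp

lemma RD_lim:
  assumes cx: "cauchy_approx_in RD x"
  shows "is_dedekind_cut (limc x) \<and> is_limit x (limc x)"
proof -
  have D: "\<And>e. e > 0 \<Longrightarrow> is_dedekind_cut (x e)" using cx unfolding cauchy_approx_in_def RD_def by blast
  have C: "\<And>d e. d > 0 \<Longrightarrow> e > 0 \<Longrightarrow> cl (d + e) (x d) (x e)"
    using cx close_cl unfolding cauchy_approx_in_def by blast
  have dc: "is_dedekind_cut (limc x)"
    unfolding is_dedekind_cut_def
  proof (intro conjI allI impI iffI)
    obtain q0 where "lower (x 1) q0" using DI[OF D[of 1]] by auto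
    hence "\<exists>e>0. \<exists>t>0. lower (x e) ((q0 - 2) + e + t)"
      by (intro exI[of _ 1] conjI) auto
    thus "\<exists>q. lower (limc x) q" unfolding limc_lower by blast
  next
    have "is_dedekind_cut (x 1)" using D by simp
    then obtain r0 where "upper (x 1) r0" unfolding is_dedekind_cut_def by blast
    hence "\<exists>e>0. \<exists>t>0. upper (x e) ((r0 + 2) - e - t)"
      by (intro exI[of _ 1] conjI) auto
    thus "\<exists>r. upper (limc x) r" unfolding limc_upper by blast
  next
    fix q assume "lower (limc x) q"
    then obtain e t where et: "e > 0" "t > 0" "lower (x e) (q + e + t)" unfolding limc_lower by blast
    have eq: "(q + t/2) + e + t/2 = q + e + t" by (simp add: field_simps)
    have "lower (x e) ((q + t/2) + e + t/2)" using et(3) eq by metis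
    hence "lower (limc x) (q + t/2)" unfolding limc_lower using et by (meson half_gt_zero)
    thus "\<exists>q'. q < q' \<and> lower (limc x) q'" using et by (intro exI[of _ "q + t/2"]) simp
  next
    fix q assume "\<exists>q'. q < q' \<and> lower (limc x) q'"
    then obtain q' e t where et: "q < q'" "e > 0" "t > 0" "lower (x e) (q' + e + t)"
      unfolding limc_lower by blast
    have eq: "q + e + (t + (q' - q)) = q' + e + t" by (simp add: field_simps)
    have "lower (x e) (q + e + (t + (q' - q)))" using et(4) eq by metis
    moreover have "t + (q' - q) > 0" using et by simp
    ultimately show "lower (limc x) q" unfolding limc_lower using et by blast
  next
    fix r assume "upper (limc x) r"
    then obtain e t where et: "e > 0" "t > 0" "upper (x e) (r - e - t)" unfolding limc_upper by blast
    have eq: "(r - t/2) - e - t/2 = r - e - t" by (simp add: field_simps)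
    have "upper (x e) ((r - t/2) - e - t/2)" using et(3) eq by metis
    hence "upper (limc x) (r - t/2)" unfolding limc_upper using et by (meson half_gt_zero)
    thus "\<exists>r'. r' < r \<and> upper (limc x) r'" using et by (intro exI[of _ "r - t/2"]) simp
  next
    fix r assume "\<exists>r'. r' < r \<and> upper (limc x) r'"
    then obtain r' e t where et: "r' < r" "e > 0" "t > 0" "upper (x e) (r' - e - t)"
      unfolding limc_upper by blast
    have eq: "r - e - (t + (r - r')) = r' - e - t" by (simp add: field_simps)
    have "upper (x e) (r - e - (t + (r - r')))" using et(4) eq by metis
    moreover have "t + (r - r') > 0" using et by simp
    ultimately show "upper (limc x) r" unfolding limc_upper using et by blast
  next
    fix q r assume "lower (limc x) q \<and> upper (limc x) r"
    then obtain e t d h where et: "e > 0" "t > 0" "lower (x e) (q + e + t)"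
      "d > 0" "h > 0" "upper (x d) (r - d - h)" unfolding limc_lower limc_upper by blast
    from C[OF et(1) et(4)] obtain s1 p1 where A: "upper (x e) s1" "lower (x d) p1" "s1 - p1 \<le> e + d"
      unfolding cl_def by blast
    have "q + e + t < s1" using DT[OF D[OF et(1)] et(3) A(1)] .
    moreover have "p1 < r - d - h" using DT[OF D[OF et(4)] A(2) et(6)] .
    ultimately show "q < r" using A(3) et by simp
  next
    fix q r :: rat assume qr: "q < r"
    define e where "e = (r - q) / 5"
    have e: "e > 0" using qr e_def by simp
    have "q + e + e < r - e - e" using qr e_def by (simp add: field_simps)
    from DLoc[OF D[OF e] this] show "lower (limc x) q \<or> upper (limc x) r"
      unfolding limc_lower limc_upper using e by blast
  qed
  have lim: "is_limit x (limc x)" unfolding is_limit_def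
  proof (intro allI impI)
    fix e th :: rat assume e: "e > 0" and th: "th > 0"
    define d where "d = th / 4"
    have d: "d > 0" using th d_def by simp
    from C[OF e d] obtain s1 p1 where A: "upper (x e) s1" "lower (x d) p1" "s1 - p1 \<le> e + d"
      unfolding cl_def by blast
    from C[OF e d] obtain s2 p2 where B: "lower (x e) s2" "upper (x d) p2" "p2 - s2 \<le> e + d"
      unfolding cl_def by blast
    have "lower (x d) ((p1 - d - d) + d + d)" using A(2) by simp
    hence L: "lower (limc x) (p1 - d - d)" unfolding limc_lower using d by blast
    have "upper (x d) ((p2 + d + d) - d - d)" using B(2) by simp
    hence U: "upper (limc x) (p2 + d + d)" unfolding limc_upper using d by blast
    have "s1 - (p1 - d - d) \<le> e + th" "(p2 + d + d) - s2 \<le> e + th"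
      using A(3) B(3) d_def th by simp_all
    hence "cl (e + th) (x e) (limc x)" unfolding cl_def
      using A(1) B(1) L U by blast
    thus "close (e + th) (x e) (limc x)" using cl_close[OF D[OF e] dc] by blast
  qed
  show ?thesis using dc lim by blast
qed

lemma rat_cut_RD: "rat_cut q \<in> RD"
  unfolding RD_def rat_cut_def is_dedekind_cut_def lower_def upper_def
proof (intro CollectI conjI allI impI iffI)
  show "\<exists>r. fst ((\<lambda>r. r < q), (\<lambda>r. q < r)) r" by (rule exI[of _ "q - 1"]) simp
  show "\<exists>r. snd ((\<lambda>r. r < q), (\<lambda>r. q < r)) r" by (rule exI[of _ "q + 1"]) simp
qed (auto dest: dense)

lemma RD_complete: "cauchy_complete RD"
  unfolding cauchy_complete_def RD_def
  using RD_lim unfolding RD_def by blast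

lemma RE_sub: "RE \<subseteq> RD"
  unfolding RE_def using RD_complete rat_cut_RD by blast

lemma limits_unique:
  assumes "\<forall>e>0. is_dedekind_cut (x e)" "is_dedekind_cut u" "is_dedekind_cut v"
    "is_limit x u" "is_limit x v"
  shows "u = v"
proof (rule cl_eq[OF assms(2,3)], intro allI impI)
  fix e :: rat assume e: "e > 0"
  define a where "a = e / 4"
  have a: "a > 0" using e a_def by simp
  have "cl (a + a) (x a) u" using assms(4) a close_cl unfolding is_limit_def by blast
  moreover have "cl (a + a) (x a) v" using assms(5) a close_cl unfolding is_limit_def by blast
  ultimately have "cl (a + a + (a + a)) u v" using cl_tri assms(1) a by blast
  moreover have "a + a + (a + a) = e" using a_def by simp
  ultimately show "cl e u v" by simp
qed

theorem lemma2p27: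
  shows "cauchy_complete RE"
  unfolding cauchy_complete_def
proof (intro allI impI)
  fix x assume cx: "cauchy_approx_in RE x"
  hence cxD: "cauchy_approx_in RD x" using RE_sub unfolding cauchy_approx_in_def by blast
  have D: "\<forall>e>0. is_dedekind_cut (x e)" using cxD unfolding cauchy_approx_in_def RD_def by blast
  from RD_lim[OF cxD] have u: "is_dedekind_cut (limc x)" "is_limit x (limc x)" by auto
  have "limc x \<in> RE" unfolding RE_def
  proof (intro CollectI allI impI)
    fix S assume S: "S \<subseteq> RD \<and> (\<forall>q. rat_cut q \<in> S) \<and> cauchy_complete S"
    have "cauchy_approx_in S x" using cx S unfolding cauchy_approx_in_def RE_def by blast
    then obtain v where v: "v \<in> S" "is_limit x v" using S unfolding cauchy_complete_def by blast
    have "is_dedekind_cut v" using v S unfolding RD_def by blast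
    hence "v = limc x" using limits_unique[OF D _ u(1) v(2) u(2)] by blast
    thus "limc x \<in> S" using v by simp
  qed
  thus "\<exists>u\<in>RE. is_limit x u" using u by blast
qed

end
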